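(* For every Sauer Matrix $S$ of size $k$, the set \[ \mathcal{P}(S) = \{ r \in [0,1]^k : \Delta_\ell(r+S) \le 1 \text{ for each } 1 \le \ell \le k\} \] is a polytope.
   Context: For a real matrix $M$ and $\ell\ge1$, $\Delta_\ell(M)$ denotes the maximum of $|\det(B)|$ over all $\ell\times\ell$ submatrices $B$ of $M$. For $r\in\mathbb{R}^k$ and a matrix $S$ with $k$ rows and columns $S_1,\dots,S_N$, $r+S$ is the matrix with columns $r+S_i$. A Sauer Matrix of size $k$ is a matrix $S\in\{-1,0,1\}^{k\times 2^k}$ such that every subset of $[k]$ is the support (set of nonzero coordinates) of exactly one column, the nonzero entries being arbitrary elements of $\{-1,1\}$. *)

theory Defs
  imports "HOL-Analysis.Analysis" "Jordan_Normal_Form.Determinant"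
begin

text \<open>Matrices with k rows and N columns are represented as real^'c^'n:
 rows are indexed by the finite type 'n (CARD('n) = k), columns by the finite type 'c.\<close>

text \<open>A submatrix is given by an injective choice of l rows and l columns; the
 order of the chosen rows/columns only changes the sign of the determinant.\<close>
definition sub_abs_dets :: "nat \<Rightarrow> real^'c^'n \<Rightarrow> real set" where
  "sub_abs_dets l M =
     {\<bar>Determinant.det (Matrix.mat l l (\<lambda>(i,j). vec_nth (vec_nth M (f i)) (g j)))\<bar> | f g.
        inj_on f {..<l} \<and> inj_on g {..<l}}"

definition Delta :: "nat \<Rightarrow> real^'c^'n \<Rightarrow> real" where
  "Delta l M = Max (sub_abs_dets l M)"

definition add_col :: "real^'n \<Rightarrow> real^'c^'n \<Rightarrow> real^'c^'n" where
  "add_col r S = (\<chi> i c. vec_nth r i + vec_nth (vec_nth S i) c)"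

definition sauer_matrix :: "real^'c^'n \<Rightarrow> bool" where
  "sauer_matrix S \<longleftrightarrow>
     CARD('c) = 2 ^ CARD('n) \<and>
     (\<forall>i c. vec_nth (vec_nth S i) c \<in> {-1, 0, 1}) \<and>
     (\<forall>A :: 'n set. \<exists>!c. {i. vec_nth (vec_nth S i) c \<noteq> 0} = A)"

definition PS :: "real^'c^'n \<Rightarrow> (real^'n) set" where
  "PS S = {r. (\<forall>i. 0 \<le> vec_nth r i \<and> vec_nth r i \<le> 1) \<and>
              (\<forall>l. 1 \<le> l \<and> l \<le> CARD('n) \<longrightarrow> Delta l (add_col r S) \<le> 1)}"

end

theory Submission
  imports Defs
begin

definition bordA :: "nat \<Rightarrow> (nat \<Rightarrow> real) \<Rightarrow> real mat \<Rightarrow> real mat" where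
  "bordA l u A = Matrix.mat (Suc l) (Suc l) (\<lambda>(i,j). if i = 0 then (if j = 0 then 1 else 0)
      else if j = 0 then u (i-1) else A $$ (i-1, j-1))"

definition bordE :: "nat \<Rightarrow> real mat" where
  "bordE l = Matrix.mat (Suc l) (Suc l) (\<lambda>(i,j). if i = j then 1 else if i = 0 then -1 else 0)"

lemma det_bordE: "Determinant.det (bordE l) = 1"
proof -
  have "Determinant.det (bordE l) = prod_list (diag_mat (bordE l))"
    by (rule det_upper_triangular[of _ "Suc l"]) (auto simp: upper_triangular_def bordE_def)
  also have "\<dots> = 1" by (simp add: prod_list_diag_prod bordE_def)
  finally show ?thesis .
qed

lemma det_bordA:
  assumes A: "A \<in> carrier_mat l l"
  shows "Determinant.det (bordA l u A) = Determinant.det A"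
proof -
  have "Determinant.det (bordA l u A) = (\<Sum>j<Suc l. bordA l u A $$ (0,j) * cofactor (bordA l u A) 0 j)"
    by (rule laplace_expansion_row) (auto simp: bordA_def)
  also have "\<dots> = (\<Sum>j<Suc l. if j = 0 then cofactor (bordA l u A) 0 j else 0)"
    by (intro sum.cong) (auto simp: bordA_def)
  also have "\<dots> = cofactor (bordA l u A) 0 0"
    by (simp add: sum.delta')
  also have "mat_delete (bordA l u A) 0 0 = A"
    using A by (intro eq_matI) (auto simp: mat_delete_def bordA_def)
  then have "cofactor (bordA l u A) 0 0 = Determinant.det A" by (simp add: cofactor_def)
  finally show ?thesis .
qed
definition bordM :: "nat \<Rightarrow> (nat \<Rightarrow> real) \<Rightarrow> (nat \<Rightarrow> nat \<Rightarrow> real) \<Rightarrow> real mat" where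
  "bordM l u B = Matrix.mat (Suc l) (Suc l) (\<lambda>(i,j). if i = 0 then (if j = 0 then 1 else -1)
      else if j = 0 then u (i-1) else B (i-1) (j-1))"

lemma bord_prod:
  assumes "A = Matrix.mat l l (\<lambda>(i,j). u i + B i j)"
  shows "bordM l u B = bordA l u A * bordE l"
proof (rule eq_matI)
  fix i j assume i: "i < dim_row (bordA l u A * bordE l)" and j: "j < dim_col (bordA l u A * bordE l)"
  then have il: "i < Suc l" and jl: "j < Suc l" by (auto simp: bordA_def bordE_def)
  have "(bordA l u A * bordE l) $$ (i,j) = (\<Sum>k<Suc l. bordA l u A $$ (i,k) * bordE l $$ (k,j))"
    using il jl by (simp add: bordA_def bordE_def scalar_prod_def atLeast0LessThan)
  also have "\<dots> = bordM l u B $$ (i,j)"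
  proof (cases "j = 0")
    case True
    have "(\<Sum>k<Suc l. bordA l u A $$ (i,k) * bordE l $$ (k,j)) =
        (\<Sum>k<Suc l. if k = 0 then bordA l u A $$ (i,k) else 0)"
      using True jl by (intro sum.cong) (auto simp: bordE_def)
    also have "\<dots> = bordA l u A $$ (i,0)" by (simp add: sum.delta')
    also have "\<dots> = bordM l u B $$ (i,j)"
      using True il by (auto simp: bordA_def bordM_def)
    finally show ?thesis .
  next
    case False
    have "(\<Sum>k<Suc l. bordA l u A $$ (i,k) * bordE l $$ (k,j)) =
        (\<Sum>k<Suc l. (if k = j then bordA l u A $$ (i,k) else 0) - (if k = 0 then bordA l u A $$ (i,k) else 0))"
      using False jl by (intro sum.cong) (auto simp: bordE_def)
    also have "\<dots> = bordA l u A $$ (i,j) - bordA l u A $$ (i,0)"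
      using jl by (simp add: sum_subtractf sum.delta')
    also have "\<dots> = bordM l u B $$ (i,j)"
      using False il jl assms by (auto simp: bordA_def bordM_def)
    finally show ?thesis .
  qed
  finally show "bordM l u B $$ (i,j) = (bordA l u A * bordE l) $$ (i,j)" by simp
qed (auto simp: bordA_def bordE_def bordM_def)

lemma det_affine:
  "Determinant.det (Matrix.mat l l (\<lambda>(i,j). u i + B i j)) =
     cofactor (bordM l (\<lambda>_. 0) B) 0 0 + (\<Sum>i<l. u i * cofactor (bordM l (\<lambda>_. 0) B) (Suc i) 0)"
proof -
  define A where "A = Matrix.mat l l (\<lambda>(i,j). u i + B i j)"
  have Ac: "A \<in> carrier_mat l l" by (simp add: A_def)
  have "Determinant.det A = Determinant.det (bordA l u A * bordE l)"
  proof -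
    have "Determinant.det (bordA l u A * bordE l) = Determinant.det (bordA l u A) * Determinant.det (bordE l)"
      by (rule det_mult[of _ "Suc l"]) (auto simp: bordA_def bordE_def)
    then show ?thesis by (simp add: det_bordE det_bordA[OF Ac])
  qed
  also have "\<dots> = Determinant.det (bordM l u B)"
    using bord_prod[OF A_def] by simp
  also have "\<dots> = (\<Sum>i<Suc l. bordM l u B $$ (i,0) * cofactor (bordM l u B) i 0)"
    by (rule laplace_expansion_column) (auto simp: bordM_def)
  also have "\<dots> = (\<Sum>i<Suc l. bordM l u B $$ (i,0) * cofactor (bordM l (\<lambda>_. 0) B) i 0)"
  proof (intro sum.cong refl arg_cong2[where f="(*)"])
    fix i assume "i \<in> {..<Suc l}"
    have "mat_delete (bordM l u B) i 0 = mat_delete (bordM l (\<lambda>_. 0) B) i 0"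
      by (intro eq_matI) (auto simp: mat_delete_def bordM_def)
    then show "cofactor (bordM l u B) i 0 = cofactor (bordM l (\<lambda>_. 0) B) i 0"
      by (simp add: cofactor_def)
  qed
  also have "\<dots> = cofactor (bordM l (\<lambda>_. 0) B) 0 0 + (\<Sum>i<l. u i * cofactor (bordM l (\<lambda>_. 0) B) (Suc i) 0)"
    by (subst sum.lessThan_Suc_shift) (simp add: bordM_def)
  finally show ?thesis by (simp add: A_def)
qed

lemma det_add_col_affine:
  fixes S :: "real^'c^'n" and f :: "nat \<Rightarrow> 'n" and g :: "nat \<Rightarrow> 'c"
  shows "\<exists>a b. \<forall>r. Determinant.det (Matrix.mat l l (\<lambda>(i,j). vec_nth (vec_nth (add_col r S) (f i)) (g j))) = a \<bullet> r + b"
proof -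
  define B where "B = (\<lambda>i j. vec_nth (vec_nth S (f i)) (g j))"
  define c where "c = (\<lambda>i. cofactor (bordM l (\<lambda>_. 0) B) (Suc i) 0)"
  define a :: "real^'n" where "a = (\<Sum>i<l. c i *\<^sub>R axis (f i) 1)"
  have "Determinant.det (Matrix.mat l l (\<lambda>(i,j). vec_nth (vec_nth (add_col r S) (f i)) (g j)))
        = a \<bullet> r + cofactor (bordM l (\<lambda>_. 0) B) 0 0" for r
  proof -
    have "Matrix.mat l l (\<lambda>(i,j). vec_nth (vec_nth (add_col r S) (f i)) (g j))
        = Matrix.mat l l (\<lambda>(i,j). vec_nth r (f i) + B i j)"
      by (simp add: add_col_def B_def)
    moreover have "a \<bullet> r = (\<Sum>i<l. vec_nth r (f i) * c i)"
      by (simp add: a_def inner_sum_left inner_axis' mult.commute)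
    ultimately show ?thesis by (simp add: det_affine c_def)
  qed
  then show ?thesis by blast
qed

lemma polyhedron_abs_affine:
  fixes a :: "real^'n"
  shows "polyhedron {r. \<bar>a \<bullet> r + b\<bar> \<le> (1::real)}"
proof -
  have "{r. \<bar>a \<bullet> r + b\<bar> \<le> (1::real)} = {r. a \<bullet> r \<le> 1 - b} \<inter> {r. (-a) \<bullet> r \<le> 1 + b}"
    by auto
  then show ?thesis by (simp only:) (intro polyhedron_Int polyhedron_halfspace_le)
qed

definition detfg :: "nat \<Rightarrow> real^'c^'n \<Rightarrow> (nat \<Rightarrow> 'n) \<Rightarrow> (nat \<Rightarrow> 'c) \<Rightarrow> real" where
  "detfg l M f g = \<bar>Determinant.det (Matrix.mat l l (\<lambda>(i,j). vec_nth (vec_nth M (f i)) (g j)))\<bar>"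

lemma detfg_restrict:
  "detfg l M (restrict f {..<l}) (restrict g {..<l}) = detfg l M f g"
proof -
  have "Matrix.mat l l (\<lambda>(i,j). vec_nth (vec_nth M (restrict f {..<l} i)) (restrict g {..<l} j))
      = Matrix.mat l l (\<lambda>(i,j). vec_nth (vec_nth M (f i)) (g j))"
    by (intro eq_matI) auto
  then show ?thesis by (simp add: detfg_def)
qed

definition IFG :: "nat \<Rightarrow> ((nat \<Rightarrow> 'n::finite) \<times> (nat \<Rightarrow> 'c::finite)) set" where
  "IFG l = {(f,g). f \<in> {..<l} \<rightarrow>\<^sub>E UNIV \<and> g \<in> {..<l} \<rightarrow>\<^sub>E UNIV \<and> inj_on f {..<l} \<and> inj_on g {..<l}}"

lemma finite_IFG: "finite (IFG l :: ((nat \<Rightarrow> 'n::finite) \<times> (nat \<Rightarrow> 'c::finite)) set)"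
proof -
  have "IFG l \<subseteq> ({..<l} \<rightarrow>\<^sub>E UNIV) \<times> ({..<l} \<rightarrow>\<^sub>E UNIV)" by (auto simp: IFG_def)
  moreover have "finite (({..<l} \<rightarrow>\<^sub>E (UNIV::'n set)) \<times> ({..<l} \<rightarrow>\<^sub>E (UNIV::'c set)))"
    by (intro finite_cartesian_product finite_PiE) auto
  ultimately show ?thesis by (rule finite_subset)
qed

lemma sub_abs_dets_eq:
  fixes M :: "real^'c^'n"
  shows "sub_abs_dets l M = (\<lambda>(f,g). detfg l M f g) ` IFG l"
proof
  show "(\<lambda>(f,g). detfg l M f g) ` IFG l \<subseteq> sub_abs_dets l M"
    by (auto simp: IFG_def sub_abs_dets_def detfg_def)
  show "sub_abs_dets l M \<subseteq> (\<lambda>(f,g). detfg l M f g) ` IFG l"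
  proof
    fix x assume "x \<in> sub_abs_dets l M"
    then obtain f g where fg: "inj_on f {..<l}" "inj_on g {..<l}" and x: "x = detfg l M f g"
      by (auto simp: sub_abs_dets_def detfg_def)
    have "(restrict f {..<l}, restrict g {..<l}) \<in> IFG l"
      using fg by (auto simp: IFG_def inj_on_def)
    moreover have "x = detfg l M (restrict f {..<l}) (restrict g {..<l})"
      using x detfg_restrict by metis
    ultimately show "x \<in> (\<lambda>(f,g). detfg l M f g) ` IFG l" by force
  qed
qed

lemma IFG_nonempty:
  assumes "l \<le> CARD('n::finite)" "l \<le> CARD('c::finite)"
  shows "IFG l \<noteq> ({} :: ((nat \<Rightarrow> 'n) \<times> (nat \<Rightarrow> 'c)) set)"
proof -
  obtain f :: "nat \<Rightarrow> 'n" where f: "inj_on f {..<l}"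
    using card_le_inj[of "{..<l}" "UNIV::'n set"] assms by auto
  obtain g :: "nat \<Rightarrow> 'c" where g: "inj_on g {..<l}"
    using card_le_inj[of "{..<l}" "UNIV::'c set"] assms by auto
  have "(restrict f {..<l}, restrict g {..<l}) \<in> IFG l"
    using f g by (auto simp: IFG_def inj_on_def)
  then show ?thesis by blast
qed

theorem proposition4p1:
  fixes S :: "real^'c^'n"
  assumes "sauer_matrix S"
  shows "polytope (PS S)"
proof -
  have cc: "CARD('n) \<le> CARD('c)"
    using assms unfolding sauer_matrix_def by (metis less_exp less_imp_le)
  define con where "con = (\<lambda>(l, f, g). {r :: real^'n. detfg l (add_col r S) f g \<le> 1})"
  define F where "F = con ` (SIGMA l:{1..CARD('n)}. IFG l)"
  have finF: "finite F" unfolding F_def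
    by (intro finite_imageI finite_SigmaI finite_IFG) auto
  have polyF: "polyhedron X" if "X \<in> F" for X
  proof -
    obtain l f g where X: "X = {r :: real^'n. detfg l (add_col r S) f g \<le> 1}"
      using \<open>X \<in> F\<close> by (auto simp: F_def con_def)
    obtain a b where ab: "\<forall>r. Determinant.det (Matrix.mat l l (\<lambda>(i,j). vec_nth (vec_nth (add_col r S) (f i)) (g j))) = a \<bullet> r + b"
      using det_add_col_affine by blast
    have "X = {r. \<bar>a \<bullet> r + b\<bar> \<le> 1}"
      using ab by (simp add: X detfg_def)
    then show ?thesis by (simp add: polyhedron_abs_affine)
  qed
  have eq: "PS S = cbox 0 1 \<inter> \<Inter>F"
  proof (intro equalityI subsetI)
    fix r assume r: "r \<in> PS S"
    have "r \<in> X" if "X \<in> F" for X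
    proof -
      obtain l f g where l: "1 \<le> l" "l \<le> CARD('n)" and fg: "(f,g) \<in> IFG l"
        and X: "X = {r :: real^'n. detfg l (add_col r S) f g \<le> 1}"
        using \<open>X \<in> F\<close> by (auto simp: F_def con_def)
      have "detfg l (add_col r S) f g \<in> sub_abs_dets l (add_col r S)"
        using fg by (force simp: sub_abs_dets_eq)
      moreover have "finite (sub_abs_dets l (add_col r S))"
        by (simp add: sub_abs_dets_eq finite_IFG)
      ultimately have "detfg l (add_col r S) f g \<le> Delta l (add_col r S)"
        by (simp add: Delta_def)
      also have "\<dots> \<le> 1" using r l by (simp add: PS_def)
      finally show ?thesis by (simp add: X)
    qed
    moreover have "r \<in> cbox 0 1" using r by (simp add: PS_def mem_box_cart)
    ultimately show "r \<in> cbox 0 1 \<inter> \<Inter>F" by blast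
  next
    fix r assume r: "r \<in> cbox 0 1 \<inter> \<Inter>F"
    have "Delta l (add_col r S) \<le> 1" if l: "1 \<le> l" "l \<le> CARD('n)" for l
    proof -
      have ne: "IFG l \<noteq> ({} :: ((nat \<Rightarrow> 'n) \<times> (nat \<Rightarrow> 'c)) set)"
        by (rule IFG_nonempty) (use l cc in auto)
      have "\<forall>x \<in> sub_abs_dets l (add_col r S). x \<le> 1"
      proof (clarsimp simp: sub_abs_dets_eq)
        fix f :: "nat \<Rightarrow> 'n" and g :: "nat \<Rightarrow> 'c" assume fg: "(f,g) \<in> IFG l"
        then have "con (l,f,g) \<in> F" using l by (force simp: F_def)
        then show "detfg l (add_col r S) f g \<le> 1" using r by (auto simp: con_def)
      qed
      moreover have "finite (sub_abs_dets l (add_col r S))" "sub_abs_dets l (add_col r S) \<noteq> {}"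
        using ne by (simp_all add: sub_abs_dets_eq finite_IFG)
      ultimately show ?thesis by (simp add: Delta_def)
    qed
    then show "r \<in> PS S" using r by (simp add: PS_def mem_box_cart)
  qed
  show ?thesis unfolding eq
    by (intro polytope_Int_polyhedron polytope_interval polyhedron_Inter finF polyF)
qed

end
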